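(* Let $A$ be a deterministic max-finding algorithm that makes $O(n)$ comparisons on $n$ elements. Then $A$ has error at least $\log_2\log_2 n - O(1)$.
   Context: Model of imprecise comparisons: there are $n$ elements, each with a fixed unknown real value; we identify an element with its value. Asked to compare $x_i$ and $x_j$, the comparator answers either "$x_i \ge x_j$" or "$x_j \ge x_i$". If $|x_i-x_j|>1$ the answer is correct; if $|x_i-x_j|\le 1$ the answer is arbitrary (possibly adversarial and adaptive). The error of a max-finding algorithm (on inputs of size $n$) is the smallest $k$ such that for every input and every consistent comparator behaviour its output $x$ satisfies $x \ge x^*-k$, where $x^*$ is the maximum value of an input element. *)

theory Defs
  imports Complex_Main
begin

text \<open>A deterministic comparison algorithm on n elements (indices 0..n-1) is a
decision tree.  Node i j l r: compare x_i with x_j; if the comparator answers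
"x_i \<ge> x_j" continue with l, otherwise with r.  Leaf k: run_output element k.\<close>

datatype dtree = Leaf nat | Node nat nat dtree dtree

fun wf_tree :: "nat \<Rightarrow> dtree \<Rightarrow> bool" where
  "wf_tree n (Leaf k) = (k < n)"
| "wf_tree n (Node i j l r) = (i < n \<and> j < n \<and> wf_tree n l \<and> wf_tree n r)"

fun depth :: "dtree \<Rightarrow> nat" where
  "depth (Leaf k) = 0"
| "depth (Node i j l r) = Suc (max (depth l) (depth r))"

text \<open>An adaptive comparator: its answer may depend on the whole history of
previous answers (True = "x_i \<ge> x_j").\<close>
type_synonym comparator = "bool list \<Rightarrow> bool"

fun run_output :: "comparator \<Rightarrow> bool list \<Rightarrow> dtree \<Rightarrow> nat" where
  "run_output f h (Leaf k) = k"
| "run_output f h (Node i j l r) =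
     (if f h then run_output f (h @ [True]) l else run_output f (h @ [False]) r)"

fun consistent :: "(nat \<Rightarrow> real) \<Rightarrow> comparator \<Rightarrow> bool list \<Rightarrow> dtree \<Rightarrow> bool" where
  "consistent x f h (Leaf k) = True"
| "consistent x f h (Node i j l r) =
     ((x i > x j + 1 \<longrightarrow> f h) \<and> (x j > x i + 1 \<longrightarrow> \<not> f h) \<and>
      (if f h then consistent x f (h @ [True]) l else consistent x f (h @ [False]) r))"

definition error_le :: "nat \<Rightarrow> dtree \<Rightarrow> real \<Rightarrow> bool" where
  "error_le n t k \<longleftrightarrow>
     (\<forall>x :: nat \<Rightarrow> real. \<forall>f. consistent x f [] t \<longrightarrow>
        x (run_output f [] t) \<ge> Max (x ` {..<n}) - k)"

end

theory Submission
  imports Defs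
begin


definition wins :: "(nat\<times>nat) list \<Rightarrow> nat \<Rightarrow> nat" where
  "wins E v = length (filter (\<lambda>e. fst e = v) E)"

fun arun :: "(nat\<times>nat) list \<Rightarrow> dtree \<Rightarrow> nat \<times> (nat\<times>nat) list" where
  "arun es (Leaf k) = (k, es)"
| "arun es (Node i j l r) = (if wins es i \<le> wins es j then arun (es @ [(i,j)]) l
                             else arun (es @ [(j,i)]) r)"

fun walk :: "dtree \<Rightarrow> bool list \<Rightarrow> dtree \<times> (nat\<times>nat) list" where
  "walk t [] = (t, [])"
| "walk (Leaf k) (b#h) = (Leaf k, [])"
| "walk (Node i j l r) (b#h) = (fst (walk (if b then l else r) h),
      (if b then (i,j) else (j,i)) # snd (walk (if b then l else r) h))"

lemma walk_snoc:
  "fst (walk t h) = Node i j l r \<Longrightarrow>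
   walk t (h@[b]) = (if b then l else r, snd (walk t h) @ [if b then (i,j) else (j,i)])"
proof (induction h arbitrary: t)
  case Nil
  then show ?case by (cases b) auto
next
  case (Cons a h)
  then show ?case by (cases t) auto
qed

definition advf :: "dtree \<Rightarrow> comparator" where
  "advf t h = (case fst (walk t h) of Node i j l r \<Rightarrow> wins (snd (walk t h)) i \<le> wins (snd (walk t h)) j
               | Leaf k \<Rightarrow> True)"

definition G :: "(nat \<Rightarrow> real) \<Rightarrow> (nat\<times>nat) list \<Rightarrow> bool" where
  "G x E = (\<forall>e\<in>set E. \<not> (x (snd e) > x (fst e) + 1))"

lemma arun_prefix: "\<exists>ys. snd (arun es s) = es @ ys"
proof (induction es s rule: arun.induct)
  case (1 es k) then show ?case by auto
next
  case (2 es i j l r)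
  show ?case
  proof (cases "wins es i \<le> wins es j")
    case True
    then obtain ys where "snd (arun (es @ [(i, j)]) l) = (es @ [(i, j)]) @ ys" using 2 by blast
    then show ?thesis using True by auto
  next
    case False
    then obtain ys where "snd (arun (es @ [(j, i)]) r) = (es @ [(j, i)]) @ ys" using 2 by blast
    then show ?thesis using False by auto
  qed
qed

lemma arun_len: "length (snd (arun es s)) \<le> length es + depth s"
  by (induction es s rule: arun.induct) auto

lemma arun_out: "wf_tree n s \<Longrightarrow> fst (arun es s) < n"
  by (induction es s rule: arun.induct) auto

definition P :: "(nat\<times>nat) list \<Rightarrow> bool" where
  "P es = (\<forall>t<length es. wins (take t es) (fst (es!t)) \<le> wins (take t es) (snd (es!t)))"

lemma P_snoc: "P es \<Longrightarrow> wins es (fst e) \<le> wins es (snd e) \<Longrightarrow> P (es @ [e])"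
  unfolding P_def
  by (auto simp: nth_append less_Suc_eq)

lemma arun_P: "P es \<Longrightarrow> P (snd (arun es s))"
proof (induction es s rule: arun.induct)
  case (1 es k) then show ?case by auto
next
  case (2 es i j l r)
  show ?case
  proof (cases "wins es i \<le> wins es j")
    case True
    then have "P (es @ [(i, j)])" using 2 by (auto intro!: P_snoc)
    then show ?thesis using 2 True by auto
  next
    case False
    then have "P (es @ [(j, i)])" using 2 by (auto intro!: P_snoc)
    then show ?thesis using 2 False by auto
  qed
qed

lemma main_run:
  "fst (walk t h) = s \<Longrightarrow>
   run_output (advf t) h s = fst (arun (snd (walk t h)) s) \<and>
   (G x (snd (arun (snd (walk t h)) s)) \<longrightarrow> consistent x (advf t) h s)"
proof (induction s arbitrary: h)
  case (Leaf k)
  then show ?case by simp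
next
  case (Node i j l r)
  define es where "es = snd (walk t h)"
  have f: "advf t h = (wins es i \<le> wins es j)"
    using Node.prems by (simp add: advf_def es_def)
  have wT: "walk t (h@[True]) = (l, es @ [(i,j)])" using walk_snoc[OF Node.prems] es_def by simp
  have wF: "walk t (h@[False]) = (r, es @ [(j,i)])" using walk_snoc[OF Node.prems] es_def by simp
  show ?case
  proof (cases "wins es i \<le> wins es j")
    case True
    obtain ys where ys: "snd (arun (es @ [(i,j)]) l) = es @ [(i,j)] @ ys"
      using arun_prefix[of "es @ [(i,j)]" l] by auto
    show ?thesis using True f wT Node.IH(1)[of "h@[True]"] ys
      by (auto simp: es_def[symmetric] G_def)
  next
    case False
    obtain ys where ys: "snd (arun (es @ [(j,i)]) r) = es @ [(j,i)] @ ys"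
      using arun_prefix[of "es @ [(j,i)]" r] by auto
    show ?thesis using False f wF Node.IH(2)[of "h@[False]"] ys
      by (auto simp: es_def[symmetric] G_def)
  qed
qed



lemma wins_append: "wins (xs @ ys) v = wins xs v + wins ys v"
  by (simp add: wins_def)

lemma wins_take_le: "wins (take t E) v \<le> wins E v"
  using wins_append[of "take t E" "drop t E" v] by simp

lemma wins_take_mono: "a \<le> b \<Longrightarrow> wins (take a E) v \<le> wins (take b E) v"
  using wins_take_le[of a "take b E" v] by (simp add: min_def)

lemma wins_take_Suc: "t < length E \<Longrightarrow>
   wins (take (Suc t) E) v = wins (take t E) v + (if fst (E!t) = v then 1 else 0)"
  by (simp add: take_Suc_conv_app_nth wins_append) (simp add: wins_def)

lemma sum_wins: "finite S \<Longrightarrow> sum (wins E) S \<le> length E"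
proof (induction E)
  case Nil then show ?case by (simp add: wins_def)
next
  case (Cons e E)
  have a: "sum (wins (e#E)) S = sum (\<lambda>u. (if fst e = u then 1 else 0)) S + sum (wins E) S"
    unfolding sum.distrib[symmetric] by (rule sum.cong) (auto simp: wins_def)
  have b: "sum (\<lambda>u. (if fst e = u then 1::nat else 0)) S \<le> 1"
    using Cons.prems by (simp add: sum.delta')
  have c: "sum (wins E) S \<le> length E" using Cons.IH Cons.prems .
  show ?case using a b c by simp
qed

lemma Hi_fin: "1 \<le> D \<Longrightarrow> {u. D \<le> wins E u} \<subseteq> fst ` set E"
proof
  fix u assume "1 \<le> D" "u \<in> {u. D \<le> wins E u}"
  then have "filter (\<lambda>e. fst e = u) E \<noteq> []" by (auto simp: wins_def)
  then obtain e where "e \<in> set E" "fst e = u" by (auto simp: filter_empty_conv)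
  then show "u \<in> fst ` set E" by auto
qed

lemma Hi_card: assumes "1 \<le> D" shows "D * card {u. D \<le> wins E u} \<le> length E"
proof -
  let ?H = "{u. D \<le> wins E u}"
  have fin: "finite ?H" by (rule finite_subset[OF Hi_fin[OF assms]]) simp
  have "D * card ?H = sum (\<lambda>u. D) ?H" by simp
  also have "\<dots> \<le> sum (wins E) ?H" by (rule sum_mono) auto
  also have "\<dots> \<le> length E" using sum_wins[OF fin] .
  finally show ?thesis .
qed

lemma Lo_card:
  assumes PE: "P E"
  shows "card {u. (w,u) \<in> set E \<and> wins E u < D} \<le> D"
proof -
  let ?L = "{u. (w,u) \<in> set E \<and> wins E u < D}"
  define tu where "tu u = (LEAST t. t < length E \<and> E!t = (w,u))" for u
  define g where "g u = wins (take (tu u) E) w" for u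
  have tu: "tu u < length E \<and> E!(tu u) = (w,u)" if "u \<in> ?L" for u
  proof -
    from that obtain t where "t < length E" "E!t = (w,u)" by (auto simp: in_set_conv_nth)
    then show ?thesis unfolding tu_def using LeastI[of "\<lambda>t. t < length E \<and> E!t = (w,u)" t] by blast
  qed
  have gD: "g u < D" if "u \<in> ?L" for u
  proof -
    have "g u \<le> wins (take (tu u) E) u"
      using PE tu[OF that] unfolding P_def g_def by (metis fst_conv snd_conv)
    also have "\<dots> \<le> wins E u" by (rule wins_take_le)
    finally show ?thesis using that by simp
  qed
  have lt: "g u < g u'" if "u \<in> ?L" "u' \<in> ?L" "tu u < tu u'" for u u'
  proof -
    have "g u' \<ge> wins (take (Suc (tu u)) E) w" unfolding g_def
      using that(3) by (intro wins_take_mono) simp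
    moreover have "wins (take (Suc (tu u)) E) w = g u + 1"
      using tu[OF that(1)] wins_take_Suc[of "tu u" E w] by (simp add: g_def)
    ultimately show ?thesis by simp
  qed
  have inj: "inj_on g ?L"
  proof (rule inj_onI)
    fix u u' assume a: "u \<in> ?L" "u' \<in> ?L" "g u = g u'"
    show "u = u'"
    proof (rule ccontr)
      assume "u \<noteq> u'"
      then have "tu u \<noteq> tu u'" using tu[OF a(1)] tu[OF a(2)] by auto
      then show False using lt[OF a(1) a(2)] lt[OF a(2) a(1)] a(3)
        by (cases "tu u < tu u'") auto
    qed
  qed
  have "card ?L = card (g ` ?L)" using inj by (simp add: card_image)
  also have "\<dots> \<le> card {..<D}" by (rule card_mono) (auto intro: gD)
  finally show ?thesis by simp
qed

fun ball :: "(nat\<times>nat) list \<Rightarrow> nat \<Rightarrow> nat \<Rightarrow> nat set" where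
  "ball E v 0 = {v}"
| "ball E v (Suc k) = ball E v k \<union> {u. \<exists>w\<in>ball E v k. (w,u) \<in> set E}"

lemma ball_mono: "d \<le> d' \<Longrightarrow> ball E v d \<subseteq> ball E v d'"
  by (induction d' ) (auto simp: le_Suc_eq)

lemma ball_sub: "ball E v k \<subseteq> insert v (snd ` set E)"
proof (induction k)
  case 0 then show ?case by simp
next
  case (Suc k)
  have "{u. \<exists>w\<in>ball E v k. (w,u) \<in> set E} \<subseteq> snd ` set E"
  proof
    fix u assume "u \<in> {u. \<exists>w\<in>ball E v k. (w,u) \<in> set E}"
    then obtain w where "(w,u) \<in> set E" by blast
    then show "u \<in> snd ` set E" by (rule rev_image_eqI) simp
  qed
  then show ?case using Suc by (simp only: ball.simps) blast
qed

lemma ball_fin: "finite (ball E v k)"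
  by (rule finite_subset[OF ball_sub]) simp

lemma ball_card_le: "card (ball E v k) \<le> Suc (length E)"
proof -
  have a: "card (ball E v k) \<le> card (insert v (snd ` set E))"
    by (rule card_mono) (auto simp: ball_sub)
  have b: "card (insert v (snd ` set E)) \<le> Suc (card (snd ` set E))" by (rule card_insert_le_m1) auto
  have c: "card (snd ` set E) \<le> length E"
    using card_image_le[of "set E" snd] card_length[of E] by simp
  show ?thesis using a b c by linarith
qed

lemma ball_card_ge: "1 \<le> card (ball E v k)"
proof -
  have "v \<in> ball E v k" using ball_mono[of 0 k E v] by auto
  then have "0 < card (ball E v k)" using ball_fin[of E v k] card_gt_0_iff by blast
  then show ?thesis by simp
qed

lemma aux_ring: "(D::nat) * (b + h + D * b) = D * (D+1) * b + D * h"
  by (simp add: algebra_simps)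

lemma ball_step:
  assumes PE: "P E" and D: "1 \<le> D"
  shows "D * card (ball E v (Suc k)) \<le> D * (D+1) * card (ball E v k) + length E"
proof -
  let ?B = "ball E v k"
  let ?H = "{u. D \<le> wins E u}"
  let ?L = "\<lambda>w. {u. (w,u) \<in> set E \<and> wins E u < D}"
  have finH: "finite ?H" by (rule finite_subset[OF Hi_fin[OF D]]) simp
  have finL: "finite (?L w)" for w
    by (rule finite_subset[of _ "snd ` set E"]) force+
  have sub: "ball E v (Suc k) \<subseteq> ?B \<union> ?H \<union> (\<Union>w\<in>?B. ?L w)"
  proof
    fix u assume "u \<in> ball E v (Suc k)"
    then consider "u \<in> ?B" | w where "w \<in> ?B" "(w,u) \<in> set E" by auto
    then show "u \<in> ?B \<union> ?H \<union> (\<Union>w\<in>?B. ?L w)"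
    proof cases
      case 1 then show ?thesis by blast
    next
      case (2 w) then show ?thesis by (cases "D \<le> wins E u") auto
    qed
  qed
  have c1: "card (ball E v (Suc k)) \<le> card (?B \<union> ?H \<union> (\<Union>w\<in>?B. ?L w))"
    by (intro card_mono finite_UnI finite_UN_I ball_fin finH finL sub)
  have c2: "card (?B \<union> ?H \<union> (\<Union>w\<in>?B. ?L w)) \<le> card ?B + card ?H + card (\<Union>w\<in>?B. ?L w)"
    using card_Un_le[of "?B \<union> ?H" "\<Union>w\<in>?B. ?L w"] card_Un_le[of ?B ?H] by linarith
  have c3: "card (\<Union>w\<in>?B. ?L w) \<le> sum (\<lambda>w. card (?L w)) ?B"
    by (rule card_UN_le) (rule ball_fin)
  have c4: "sum (\<lambda>w. card (?L w)) ?B \<le> card ?B * D"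
    using sum_bounded_above[of ?B "\<lambda>w. card (?L w)" D] Lo_card[OF PE] by simp
  have c: "card (ball E v (Suc k)) \<le> card ?B + card ?H + D * card ?B"
  proof -
    have "card ?B * D = D * card ?B" by (rule mult.commute)
    then show ?thesis using c1 c2 c3 c4 by linarith
  qed
  have d: "D * card (ball E v (Suc k)) \<le> D * (card ?B + card ?H + D * card ?B)"
    using c by (rule mult_le_mono2)
  have e: "D * (card ?B + card ?H + D * card ?B) = D * (D+1) * card ?B + D * card ?H"
    by (rule aux_ring)
  have f: "D * card ?H \<le> length E" using Hi_card[OF D] .
  show ?thesis using d e f by linarith
qed



lemma step_real:
  fixes m b b' :: nat
  assumes m1: "1 \<le> m" and b1: "1 \<le> b" and b2: "b \<le> 2*m"
   and H: "\<And>D. 1 \<le> D \<Longrightarrow> D * b' \<le> D*(D+1)*b + m"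
  shows "real b' \<le> 5 * sqrt (real m * real b)"
proof -
  define r where "r = sqrt (real m)"
  define q where "q = sqrt (real b)"
  have r0: "r > 0" using m1 by (simp add: r_def)
  have q0: "q > 0" using b1 by (simp add: q_def)
  have rr: "r*r = real m" by (simp add: r_def)
  have qq: "q*q = real b" by (simp add: q_def)
  have sq: "sqrt (real m * real b) = r*q" by (simp add: r_def q_def real_sqrt_mult)
  define D where "D = nat \<lceil>r/q\<rceil>"
  have rq0: "r/q > 0" using r0 q0 by simp
  have Dge: "real D \<ge> r/q" unfolding D_def using rq0 by linarith
  have Dlt: "real D < r/q + 1" unfolding D_def using rq0 by linarith
  have D1: "1 \<le> D" unfolding D_def using rq0 by linarith
  have Dpos: "real D > 0" using D1 by simp
  have "real (D * b') \<le> real (D*(D+1)*b + m)" using H[OF D1] by (simp only: of_nat_le_iff)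
  then have H1: "real D * real b' \<le> real D * ((real D + 1) * real b + real m / real D)"
    using Dpos by (simp add: algebra_simps)
  have H2: "real b' \<le> (real D + 1) * real b + real m / real D"
    using H1 Dpos by (simp add: mult_le_cancel_left_pos)
  have a1: "(real D + 1) * real b \<le> (r/q + 2) * (q*q)"
    unfolding qq using Dlt by (intro mult_right_mono) auto
  have a2: "(r/q + 2)*(q*q) = r*q + 2*(q*q)" using q0 by (simp add: field_simps)
  have a3: "real m / real D \<le> real m / (r/q)"
  proof (rule divide_left_mono)
    show "r/q \<le> real D" by (rule Dge)
    show "0 \<le> real m" by simp
    show "0 < real D * (r/q)" using Dpos rq0 by (rule mult_pos_pos)
  qed
  have a4: "real m / (r/q) = r*q" using r0 q0 rr[symmetric] by (simp add: field_simps)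
  have "q^2 \<le> (3/2*r)^2" using qq rr b2 by (simp add: power2_eq_square) 
  then have a5: "q \<le> 3/2*r" by (rule power2_le_imp_le) (use r0 in simp)
  have a6: "2*(q*q) \<le> 3*(r*q)" using a5 q0 by (simp add: mult_right_mono)
  show ?thesis unfolding sq using H2 a1 a2 a3 a4 a6 by linarith
qed

lemma ball_bound:
  assumes PE: "P E" and m1: "1 \<le> length E"
  shows "real (card (ball E v K)) \<le> 25 * real (length E) * (25 * real (length E)) powr (- ((1/2)^K))"
proof (induction K)
  case 0
  have "(25 * real (length E)) powr (-1) = inverse (25 * real (length E))"
    using m1 by (simp add: powr_minus)
  moreover have "E \<noteq> []" using m1 by auto
  ultimately show ?case using m1 by simp
next
  case (Suc K)
  define m where "m = length E"
  define b where "b = card (ball E v K)"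
  define y where "y = 25 * real m"
  define e where "e = ((1::real)/2)^K"
  have "(1::real) \<le> real (length E)" using m1 by (metis of_nat_1 of_nat_le_iff)
  then have y0: "y > 0" unfolding y_def m_def by linarith
  have b1: "1 \<le> b" unfolding b_def by (rule ball_card_ge)
  have b2: "b \<le> 2*m" using ball_card_le[of E v K] m1 unfolding b_def m_def by linarith
  have st: "real (card (ball E v (Suc K))) \<le> 5 * sqrt (real m * real b)"
  proof -
    have "\<And>D. 1 \<le> D \<Longrightarrow> D * card (ball E v (Suc K)) \<le> D*(D+1)*b + m"
      unfolding b_def m_def by (rule ball_step[OF PE])
    from step_real[OF _ b1 b2 this] m1 show ?thesis unfolding m_def by simp
  qed
  have IH: "real b \<le> 25 * real m * y powr (- e)"
    using Suc.IH unfolding b_def m_def y_def e_def .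
  have "sqrt (real m * real b) \<le> sqrt (real m * (25 * real m * y powr (- e)))"
    using IH by (intro real_sqrt_le_mono mult_left_mono) auto
  also have "real m * (25 * real m * y powr (- e)) = (5 * real m)^2 * y powr (- e)"
    by (simp add: power2_eq_square)
  also have "sqrt \<dots> = 5 * real m * sqrt (y powr (- e))"
    by (simp add: real_sqrt_mult)
  also have "sqrt (y powr (- e)) = y powr (- e / 2)"
    using y0 powr_half_sqrt_powr[of y "- e"] by simp
  finally have "sqrt (real m * real b) \<le> 5 * real m * y powr (- e / 2)" .
  moreover have "- e / 2 = - ((1/2)^(Suc K))" by (simp add: e_def)
  ultimately show ?case using st unfolding m_def y_def by simp
qed

lemma final_arith:
  fixes n m K :: nat and C1 :: real
  assumes n2: "2 \<le> n" and C1: "1 \<le> C1" and m1: "1 \<le> m"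
    and hb: "real n \<le> 25 * real m * (25 * real m) powr (- ((1/2)^K))"
    and hm: "real m \<le> C1 * real n" and hn: "n \<le> m + 1"
  shows "log 2 (log 2 (real n)) + log 2 (ln 2) - log 2 (ln (25*C1)) \<le> real K"
proof -
  define y where "y = 25 * real m"
  define e where "e = ((1::real)/2)^K"
  have y0: "y > 0" using m1 by (simp add: y_def)
  have e0: "e > 0" by (simp add: e_def)
  have yp: "y powr e > 0" using y0 by simp
  have n0: "real n > 0" using n2 by simp
  have h1: "real n \<le> 25*C1*real n * y powr (-e)"
  proof -
    have "25 * real m \<le> 25*C1*real n" using hm by simp
    then have "25 * real m * y powr (-e) \<le> 25*C1*real n * y powr (-e)"
      by (rule mult_right_mono) simp
    then show ?thesis using hb unfolding y_def e_def by simp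
  qed
  have h2: "1 \<le> 25*C1 * y powr (-e)"
  proof -
    have "real n * 1 \<le> real n * (25*C1 * y powr (-e))" using h1 by (simp add: algebra_simps)
    then show ?thesis using n0 by (simp only: mult_le_cancel_left_pos)
  qed
  have h3: "y powr e \<le> 25*C1"
  proof -
    have "y powr (-e) = inverse (y powr e)" by (simp add: powr_minus)
    then have "1 \<le> 25*C1 / y powr e" using h2 by (simp add: divide_inverse)
    then show ?thesis using yp by (simp add: le_divide_eq)
  qed
  have C0: "25*C1 > 0" using C1 by simp
  have h4: "e * ln y \<le> ln (25*C1)"
  proof -
    have "ln (y powr e) \<le> ln (25*C1)" using h3 yp C0 by (subst ln_le_cancel_iff) auto
    then show ?thesis by (simp only: ln_powr)
  qed
  have h5: "ln (real n) \<le> ln y"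
  proof -
    have "real n \<le> y" using hn m1 unfolding y_def by simp
    then show ?thesis using n0 y0 by simp
  qed
  have lnn: "ln (real n) > 0" using n2 by simp
  have e2: "e * 2^K = 1" unfolding e_def by (simp add: power_mult_distrib[symmetric])
  have h6: "ln (real n) \<le> 2^K * ln (25*C1)"
  proof -
    have "e * ln (real n) \<le> ln (25*C1)" using h4 h5 e0 by (meson mult_left_mono less_imp_le order_trans)
    then have "2^K * (e * ln (real n)) \<le> 2^K * ln (25*C1)" by simp
    moreover have "2^K * (e * ln (real n)) = ln (real n)" using e2 by (simp add: algebra_simps)
    ultimately show ?thesis by simp
  qed
  have lnC: "ln (25*C1) > 0" using C1 by simp
  have h7: "log 2 (ln (real n)) \<le> real K + log 2 (ln (25*C1))"
  proof -
    have "log 2 (ln (real n)) \<le> log 2 (2^K * ln (25*C1))" using h6 lnn by simp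
    also have "\<dots> = log 2 (2^K) + log 2 (ln (25*C1))" using lnC by (simp add: log_mult_pos)
    also have "log 2 ((2::real)^K) = real K" by (simp add: log_nat_power)
    finally show ?thesis .
  qed
  have h8: "log 2 (log 2 (real n)) = log 2 (ln (real n)) - log 2 (ln 2)"
    unfolding log_def[of 2 "real n"] using lnn by (simp add: log_divide_pos)
  show ?thesis using h7 h8 by linarith
qed



theorem mainTheorem18:
  fixes A :: "nat \<Rightarrow> dtree"
  assumes wf: "\<And>n. n \<ge> 1 \<Longrightarrow> wf_tree n (A n)"
    and lin: "\<exists>C N. \<forall>n\<ge>N. real (depth (A n)) \<le> C * real n"
  shows "\<exists>c N. \<forall>n\<ge>N. \<forall>k. error_le n (A n) k \<longrightarrow> k \<ge> log 2 (log 2 (real n)) - c"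
proof -
  obtain C N where CN: "\<forall>n\<ge>N. real (depth (A n)) \<le> C * real n" using lin by blast
  define C1 where "C1 = max C 1"
  have C1: "1 \<le> C1" by (simp add: C1_def)
  define c where "c = 1 + log 2 (ln (25*C1)) - log 2 (ln 2)"
  have "\<forall>n\<ge>max N 2. \<forall>k. error_le n (A n) k \<longrightarrow> k \<ge> log 2 (log 2 (real n)) - c"
  proof (intro allI impI)
    fix n k assume nN: "max N 2 \<le> n" and err0: "error_le n (A n) k"
    have n2: "2 \<le> n" using nN by simp
    define t where "t = A n"
    have wft: "wf_tree n t" using wf n2 by (simp add: t_def)
    have dep: "real (depth t) \<le> C1 * real n"
    proof -
      have "real (depth t) \<le> C * real n" using CN nN by (simp add: t_def)
      also have "\<dots> \<le> C1 * real n" by (intro mult_right_mono) (auto simp: C1_def)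
      finally show ?thesis .
    qed
    define o' where "o' = fst (arun [] t)"
    define E where "E = snd (arun [] t)"
    have w0: "fst (walk t []) = t" "snd (walk t []) = []" by simp_all
    have run: "run_output (advf t) [] t = o'"
      and cons: "\<And>x. G x E \<Longrightarrow> consistent x (advf t) [] t"
      using main_run[OF w0(1)] unfolding w0(2) o'_def E_def by auto
    have err: "\<And>x. G x E \<Longrightarrow> x o' \<ge> Max (x ` {..<n}) - k"
      using err0 cons run unfolding error_le_def t_def by metis
    have mlen: "length E \<le> depth t" using arun_len[of "[]" t] unfolding E_def by simp
    have PE: "P E" unfolding E_def by (rule arun_P) (simp add: P_def)
    have nonneg: "k \<ge> 0"
    proof -
      have "G (\<lambda>_. 0) E" by (simp add: G_def)
      from err[OF this] have "0 \<ge> Max ((\<lambda>_. (0::real)) ` {..<n}) - k" .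
      moreover have "(\<lambda>_. (0::real)) ` {..<n} = {0}" using n2 by (intro image_constant[of 0]) auto
      ultimately show ?thesis by simp
    qed
    define L where "L = log 2 (log 2 (real n)) + log 2 (ln 2) - log 2 (ln (25*C1))"
    have key: "real K + 1 \<le> k" if ns: "\<not> {..<n} \<subseteq> ball E o' K" for K
    proof -
      from ns obtain v where v: "v < n" "v \<notin> ball E o' K" by auto
      define g where "g u = (LEAST d. u \<in> ball E o' d \<or> d = Suc K)" for u
      have gle: "g u \<le> Suc K" for u unfolding g_def by (rule Least_le) simp
      have gI: "u \<in> ball E o' (g u) \<or> g u = Suc K" for u
        unfolding g_def by (rule LeastI[of _ "Suc K"]) simp
      define x where "x u = real (g u)" for u
      have G: "G x E" unfolding G_def
      proof
        fix e assume e: "e \<in> set E"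
        obtain a b where ab: "e = (a,b)" by (cases e)
        have "g b \<le> Suc (g a)"
        proof (cases "a \<in> ball E o' (g a)")
          case True
          then have "b \<in> ball E o' (Suc (g a))" using e ab by auto
          then have "b \<in> ball E o' (Suc (g a)) \<or> Suc (g a) = Suc K" by blast
          then show ?thesis unfolding g_def[of b] by (rule Least_le)
        next
          case False
          then have "g a = Suc K" using gI by blast
          then show ?thesis using gle[of b] by simp
        qed
        then show "\<not> x (snd e) > x (fst e) + 1" unfolding x_def ab by simp
      qed
      have go: "g o' = 0" unfolding g_def by (rule Least_eq_0) simp
      have gv: "g v = Suc K"
      proof (rule ccontr)
        assume "g v \<noteq> Suc K"
        then have "v \<in> ball E o' (g v)" "g v \<le> K" using gI[of v] gle[of v] by auto
        then show False using ball_mono[of "g v" K E o'] v(2) by auto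
      qed
      have "x v \<le> Max (x ` {..<n})" using v(1) by (intro Max_ge) auto
      then have "real (Suc K) \<le> Max (x ` {..<n})" using gv by (simp add: x_def)
      moreover have "x o' = 0" using go by (simp add: x_def)
      ultimately show ?thesis using err[OF G] by simp
    qed
    have bound: "L \<le> real K" if sub: "{..<n} \<subseteq> ball E o' K" for K
    proof -
      have "n \<le> card (ball E o' K)"
        using card_mono[OF ball_fin sub] by simp
      then have n_le: "n \<le> card (ball E o' K)" .
      have hn: "n \<le> length E + 1" using n_le ball_card_le[of E o' K] by simp
      have m1: "1 \<le> length E" using hn n2 by simp
      have hb: "real n \<le> 25 * real (length E) * (25 * real (length E)) powr (- ((1/2)^K))"
        using ball_bound[OF PE m1, of o' K] n_le by linarith
      have hm: "real (length E) \<le> C1 * real n" using mlen dep by linarith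
      show ?thesis unfolding L_def by (rule final_arith[OF n2 C1 m1 hb hm hn])
    qed
    have "L - 1 \<le> k"
    proof (cases "L \<le> 1")
      case True then show ?thesis using nonneg by simp
    next
      case False
      define K where "K = nat \<lceil>L\<rceil> - 1"
      have KL: "real K = real_of_int \<lceil>L\<rceil> - 1" using False unfolding K_def by linarith
      then have "\<not> L \<le> real K" by linarith
      then have "\<not> {..<n} \<subseteq> ball E o' K" using bound by blast
      from key[OF this] have "real K + 1 \<le> k" .
      then show ?thesis using KL by linarith
    qed
    then show "k \<ge> log 2 (log 2 (real n)) - c" unfolding L_def c_def by simp
  qed
  then show ?thesis by blast
qed


end
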